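(* Let $f_1,\dots,f_k\in\mathbb{K}[\mathbf{x}]$ be nonzero multihomogeneous polynomials and $<$ a monomial order on $\mathbb{K}[\mathbf{x}]$. For every $\mathbf{d}\in\mathbb{Z}^r$, the polynomials corresponding to the rows of the matrix $\mathrm{M_3H}(\{f_1,\dots,f_k\},\mathbf{d},<)$ span the $\mathbb{K}$-vector space $[\langle f_1,\dots,f_k\rangle]_{\mathbf{d}}$.
   Context: $\mathbb{K}$ is a field of characteristic $0$; $\mathbb{K}[\mathbf{x}]$ is the polynomial ring in variables $x_{i,0},\dots,x_{i,n_i}$ ($1\le i\le r$), $\mathbb{Z}^r$-graded with $x_{i,j}$ of degree the $i$-th standard basis vector; $\mathbb{K}[\mathbf{x}]_{\mathbf{d}}$ and $[I]_{\mathbf{d}}$ denote multidegree-$\mathbf{d}$ parts (zero if $\mathbf{d}$ has a negative coordinate). A Macaulay matrix has columns indexed by monomials and rows representing polynomials (entry = coefficient). The procedure $\mathrm{M_3H}(\{f_1,\dots,f_k\},\mathbf{d},<)$ returns a Macaulay matrix with columns indexed by the monomials of $\mathbb{K}[\mathbf{x}]_{\mathbf{d}}$ in decreasing order for $<$, defined recursively: if $k=1$, start from the empty such matrix and set $\mathfrak{L}=\emptyset$; if $k>1$, start from the matrix $\mathrm{M_3H}(\{f_1,\dots,f_{k-1}\},\mathbf{d},<)$ and let $\mathfrak{L}$ be the set of leading monomials (for $<$) of the nonzero rows of the Gaussian elimination (row echelon form) of $\mathrm{M_3H}(\{f_1,\dots,f_{k-1}\},\mathbf{d}-\deg(f_k),<)$.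 Then, for every monomial $\mathbf{x}^\beta\in\mathbb{K}[\mathbf{x}]_{\mathbf{d}-\deg(f_k)}$ with $\mathbf{x}^\beta\notin\mathfrak{L}$, append the row $\mathbf{x}^\beta\cdot f_k$. Return the resulting matrix. *)

theory Defs
  imports Main "HOL-Library.Poly_Mapping"
begin

text \<open>Variables x_{i,j} are encoded as pairs (i,j) with i < r (blocks 0..r-1, i.e.
 block i+1 of the paper) and j \<le> n i.\<close>

type_synonym mon = "(nat \<times> nat) \<Rightarrow>\<^sub>0 nat"
type_synonym 'k mpoly = "mon \<Rightarrow>\<^sub>0 'k"

definition vars :: "nat \<Rightarrow> (nat \<Rightarrow> nat) \<Rightarrow> (nat \<times> nat) set" where
  "vars r n = {(i, j). i < r \<and> j \<le> n i}"

definition monoms :: "nat \<Rightarrow> (nat \<Rightarrow> nat) \<Rightarrow> mon set" where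
  "monoms r n = {m. Poly_Mapping.keys m \<subseteq> vars r n}"

definition polys :: "nat \<Rightarrow> (nat \<Rightarrow> nat) \<Rightarrow> 'k::zero mpoly set" where
  "polys r n = {p. Poly_Mapping.keys p \<subseteq> monoms r n}"

definition mdeg :: "nat \<Rightarrow> (nat \<Rightarrow> nat) \<Rightarrow> mon \<Rightarrow> int list" where
  "mdeg r n m = map (\<lambda>i. int (\<Sum>j\<le>n i. Poly_Mapping.lookup m (i, j))) [0..<r]"

text \<open>Monomials of K[x]_d (empty if d has a negative coordinate)\<close>
definition monoms_deg :: "nat \<Rightarrow> (nat \<Rightarrow> nat) \<Rightarrow> int list \<Rightarrow> mon set" where
  "monoms_deg r n d = {m \<in> monoms r n. mdeg r n m = d}"

definition multihomogeneous :: "nat \<Rightarrow> (nat \<Rightarrow> nat) \<Rightarrow> 'k::zero mpoly \<Rightarrow> bool" where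
  "multihomogeneous r n p \<longleftrightarrow> (\<exists>e. \<forall>m\<in>Poly_Mapping.keys p. mdeg r n m = e)"

definition pdeg :: "nat \<Rightarrow> (nat \<Rightarrow> nat) \<Rightarrow> 'k::zero mpoly \<Rightarrow> int list" where
  "pdeg r n p = mdeg r n (SOME m. m \<in> Poly_Mapping.keys p)"

definition polys_deg :: "nat \<Rightarrow> (nat \<Rightarrow> nat) \<Rightarrow> int list \<Rightarrow> 'k::zero mpoly set" where
  "polys_deg r n d = {p. Poly_Mapping.keys p \<subseteq> monoms_deg r n d}"

text \<open>Monomial order (strict relation) on the monomials of K[x]: strict total order,
 compatible with multiplication, well-founded (equivalently 1 is the minimum).\<close>
definition monomial_order :: "nat \<Rightarrow> (nat \<Rightarrow> nat) \<Rightarrow> (mon \<Rightarrow> mon \<Rightarrow> bool) \<Rightarrow> bool" where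
  "monomial_order r n ord \<longleftrightarrow>
     (\<forall>a\<in>monoms r n. \<not> ord a a) \<and>
     (\<forall>a\<in>monoms r n. \<forall>b\<in>monoms r n. \<forall>c\<in>monoms r n. ord a b \<longrightarrow> ord b c \<longrightarrow> ord a c) \<and>
     (\<forall>a\<in>monoms r n. \<forall>b\<in>monoms r n. a = b \<or> ord a b \<or> ord b a) \<and>
     (\<forall>a\<in>monoms r n. \<forall>b\<in>monoms r n. \<forall>c\<in>monoms r n. ord a b \<longrightarrow> ord (a + c) (b + c)) \<and>
     wf {(a, b). a \<in> monoms r n \<and> b \<in> monoms r n \<and> ord a b}"

definition lm :: "(mon \<Rightarrow> mon \<Rightarrow> bool) \<Rightarrow> 'k::zero mpoly \<Rightarrow> mon" where
  "lm ord p = (THE m. m \<in> Poly_Mapping.keys p \<and> (\<forall>m'\<in>Poly_Mapping.keys p. m' \<noteq> m \<longrightarrow> ord m' m))"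

definition lin_span :: "'k::field mpoly set \<Rightarrow> 'k mpoly set" where
  "lin_span S = {p. \<exists>A c. finite A \<and> A \<subseteq> S \<and>
                    p = (\<Sum>q\<in>A. Poly_Mapping.single 0 (c q) * q)}"

text \<open>Row echelon form E of a matrix with rows R (rows as polynomials, columns ordered
 decreasingly by ord): E is row-equivalent to R (same row space, same number of rows),
 nonzero rows come first with strictly decreasing leading monomials, then zero rows.\<close>
definition is_row_echelon_of :: "(mon \<Rightarrow> mon \<Rightarrow> bool) \<Rightarrow> 'k::field mpoly list \<Rightarrow> 'k mpoly list \<Rightarrow> bool" where
  "is_row_echelon_of ord R E \<longleftrightarrow>
     length E = length R \<and> lin_span (set E) = lin_span (set R) \<and>
     (\<exists>E1 z. E = E1 @ replicate z 0 \<and> (\<forall>p\<in>set E1. p \<noteq> 0) \<and>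
             sorted_wrt (\<lambda>p q. ord (lm ord q) (lm ord p)) E1)"

definition lead_set :: "(mon \<Rightarrow> mon \<Rightarrow> bool) \<Rightarrow> 'k::field mpoly list \<Rightarrow> mon set" where
  "lead_set ord R = (let E = (SOME E. is_row_echelon_of ord R E) in
                       lm ord ` {p \<in> set E. p \<noteq> 0})"

definition deg_sub :: "int list \<Rightarrow> int list \<Rightarrow> int list" where
  "deg_sub d e = map2 (-) d e"

definition dec_list :: "(mon \<Rightarrow> mon \<Rightarrow> bool) \<Rightarrow> mon set \<Rightarrow> mon list" where
  "dec_list ord B = (SOME bs. distinct bs \<and> set bs = B \<and> sorted_wrt (\<lambda>a b. ord b a) bs)"

text \<open>M3H on the reversed list of generators: M3H_rev (f_k # ... # f_1) d.\<close>
fun M3H_rev :: "nat \<Rightarrow> (nat \<Rightarrow> nat) \<Rightarrow> (mon \<Rightarrow> mon \<Rightarrow> bool) \<Rightarrow> 'k::field mpoly list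
                \<Rightarrow> int list \<Rightarrow> 'k mpoly list" where
  "M3H_rev r n ord [] d = []"
| "M3H_rev r n ord (f # fs) d =
     (let e = deg_sub d (pdeg r n f);
          L = (if fs = [] then {} else lead_set ord (M3H_rev r n ord fs e))
      in M3H_rev r n ord fs d @
         map (\<lambda>\<beta>. Poly_Mapping.single \<beta> 1 * f) (dec_list ord (monoms_deg r n e - L)))"

text \<open>Rows (as polynomials) of the Macaulay matrix M3H({f_1,...,f_k}, d, ord)\<close>
definition M3H :: "nat \<Rightarrow> (nat \<Rightarrow> nat) \<Rightarrow> (mon \<Rightarrow> mon \<Rightarrow> bool) \<Rightarrow> 'k::field mpoly list
                \<Rightarrow> int list \<Rightarrow> 'k mpoly list" where
  "M3H r n ord fs d = M3H_rev r n ord (rev fs) d"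

definition ideal_gen :: "nat \<Rightarrow> (nat \<Rightarrow> nat) \<Rightarrow> 'k::comm_ring_1 mpoly list \<Rightarrow> 'k mpoly set" where
  "ideal_gen r n fs = {p. \<exists>gs. length gs = length fs \<and> set gs \<subseteq> polys r n \<and>
                           p = sum_list (map2 (*) gs fs)}"

definition ideal_deg :: "nat \<Rightarrow> (nat \<Rightarrow> nat) \<Rightarrow> 'k::comm_ring_1 mpoly list \<Rightarrow> int list \<Rightarrow> 'k mpoly set" where
  "ideal_deg r n fs d = ideal_gen r n fs \<inter> polys_deg r n d"

end

theory Submission
  imports Defs "HOL-Library.FuncSet" "HOL.Modules"
begin


interpretation V: module "\<lambda>c (p::'k::comm_ring_1 mpoly). Poly_Mapping.single 0 c * p"
  by unfold_locales (auto simp: algebra_simps single_add mult_single)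

lemma lin_span_eq: "lin_span S = V.span S"
  unfolding lin_span_def V.span_explicit by blast



lemma lookup_single_mult:
  "Poly_Mapping.lookup (Poly_Mapping.single (b::mon) (c::'k::comm_ring_1) * p) (b + m) = c * Poly_Mapping.lookup p m"
proof -
  have "Poly_Mapping.lookup (Poly_Mapping.single b c * p) (b + m) =
     (\<Sum>l. Poly_Mapping.lookup (Poly_Mapping.single b c) l * (\<Sum>q. Poly_Mapping.lookup p q when b + m = l + q))"
    by (rule lookup_mult)
  also have "\<dots> = (\<Sum>l. (c when b = l) * (\<Sum>q. Poly_Mapping.lookup p q when b + m = l + q))"
    by (simp add: lookup_single)
  also have "\<dots> = c * (\<Sum>q. Poly_Mapping.lookup p q when b + m = b + q)"
    by (simp add: when_mult)
  also have "\<dots> = c * (\<Sum>q. Poly_Mapping.lookup p q when q = m)"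
  proof -
    have eq: "\<And>q. (b + m = b + q) = (q = m)" by auto
    show ?thesis by (simp only: eq)
  qed
  also have "\<dots> = c * Poly_Mapping.lookup p m" by simp
  finally show ?thesis .
qed

lemma lookup_smul[simp]: "Poly_Mapping.lookup (Poly_Mapping.single 0 (c::'k::comm_ring_1) * (p::'k mpoly)) k = c * Poly_Mapping.lookup p k"
  using lookup_single_mult[of 0 c p k] by simp

lemma keys_smul: "Poly_Mapping.keys (Poly_Mapping.single 0 (c::'k::field) * (p::'k mpoly)) \<subseteq> Poly_Mapping.keys p"
  by (auto simp: in_keys_iff)

lemma keys_single_mult:
  "Poly_Mapping.keys (Poly_Mapping.single b (c::'k::comm_ring_1) * p) \<subseteq> (+) b ` Poly_Mapping.keys p"
  using keys_mult[of "Poly_Mapping.single b c" p] by (auto split: if_splits)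

lemma poly_expand: "(q::'k::comm_ring_1 mpoly) = (\<Sum>m\<in>Poly_Mapping.keys q. Poly_Mapping.single m (Poly_Mapping.lookup q m))"
proof (rule poly_mapping_eqI)
  fix k
  show "Poly_Mapping.lookup q k = Poly_Mapping.lookup (\<Sum>m\<in>Poly_Mapping.keys q. Poly_Mapping.single m (Poly_Mapping.lookup q m)) k"
    by (simp add: lookup_sum lookup_single when_def in_keys_iff)
qed

lemma single_eq_smul: "Poly_Mapping.single m (c::'k::comm_ring_1) = Poly_Mapping.single 0 c * Poly_Mapping.single m 1"
  by (simp add: mult_single)



lemma ex_first:
  assumes "finite S" "S \<noteq> {}"
    and "\<forall>a\<in>S. \<forall>b\<in>S. a = b \<or> R a b \<or> R b a"
    and "\<forall>a\<in>S. \<forall>b\<in>S. \<forall>c\<in>S. R a b \<longrightarrow> R b c \<longrightarrow> R a c"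
  shows "\<exists>m\<in>S. \<forall>x\<in>S. x \<noteq> m \<longrightarrow> R m x"
  using assms
proof (induction S rule: finite_ne_induct)
  case (singleton x)
  then show ?case by blast
next
  case (insert x F)
  have p1: "\<forall>a\<in>F. \<forall>b\<in>F. a = b \<or> R a b \<or> R b a" using insert.prems(1) by blast
  have p2: "\<forall>a\<in>F. \<forall>b\<in>F. \<forall>c\<in>F. R a b \<longrightarrow> R b c \<longrightarrow> R a c" using insert.prems(2) by blast
  obtain m where m: "m \<in> F" "\<forall>y\<in>F. y \<noteq> m \<longrightarrow> R m y" using insert.IH[OF p1 p2] by blast
  have xm: "x \<noteq> m" using m(1) insert.hyps(3) by blast
  show ?case
  proof (cases "R x m")
    case True
    have "\<forall>y\<in>insert x F. y \<noteq> x \<longrightarrow> R x y"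
    proof (intro ballI impI)
      fix y assume y: "y \<in> insert x F" "y \<noteq> x"
      then have yF: "y \<in> F" by blast
      show "R x y"
      proof (cases "y = m")
        case True then show ?thesis using \<open>R x m\<close> by simp
      next
        case False
        then have "R m y" using m yF by blast
        then show ?thesis using insert.prems(2) \<open>R x m\<close> yF m(1) by blast
      qed
    qed
    then show ?thesis by blast
  next
    case False
    then have "R m x" using insert.prems(1) m(1) xm by blast
    then have "\<forall>y\<in>insert x F. y \<noteq> m \<longrightarrow> R m y" using m by blast
    then show ?thesis using m(1) by blast
  qed
qed

lemma ex_sorted:
  assumes "finite B"
    and "\<forall>a\<in>B. \<forall>b\<in>B. a = b \<or> R a b \<or> R b a"
    and "\<forall>a\<in>B. \<forall>b\<in>B. \<forall>c\<in>B. R a b \<longrightarrow> R b c \<longrightarrow> R a c"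
  shows "\<exists>bs. distinct bs \<and> set bs = B \<and> sorted_wrt R bs"
  using assms
proof (induction "card B" arbitrary: B)
  case 0
  have "B = {}" using "0.hyps" "0.prems"(1) card_0_eq by metis
  then show ?case by (intro exI[of _ "[]"]) simp
next
  case (Suc k)
  have ne: "B \<noteq> {}" using Suc.hyps(2) by (metis card.empty nat.distinct(1))
  obtain m where m: "m \<in> B" "\<forall>x\<in>B. x \<noteq> m \<longrightarrow> R m x"
    using ex_first[OF Suc.prems(1) ne Suc.prems(2,3)] by blast
  have k: "k = card (B - {m})" using Suc.hyps(2) m(1) Suc.prems(1) by (metis card_Diff_singleton diff_Suc_1)
  have q1: "\<forall>a\<in>B - {m}. \<forall>b\<in>B - {m}. a = b \<or> R a b \<or> R b a" using Suc.prems(2) by blast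
  have q2: "\<forall>a\<in>B - {m}. \<forall>b\<in>B - {m}. \<forall>c\<in>B - {m}. R a b \<longrightarrow> R b c \<longrightarrow> R a c" using Suc.prems(3) by blast
  have fin: "finite (B - {m})" using Suc.prems(1) by blast
  obtain bs where bs: "distinct bs" "set bs = B - {m}" "sorted_wrt R bs"
    using Suc.hyps(1)[OF k fin q1 q2] by blast
  have "distinct (m # bs)" using bs by simp
  moreover have "set (m # bs) = B" using bs m(1) by auto
  moreover have "sorted_wrt R (m # bs)" using bs m by simp
  ultimately show ?case by blast
qed

lemma nth_eqI: "length x = r \<Longrightarrow> length y = r \<Longrightarrow> (\<And>i. i < r \<Longrightarrow> x ! i = y ! i) \<Longrightarrow> x = y"
  by (rule nth_equalityI) auto

lemma length_mdeg[simp]: "length (mdeg r n m) = r"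
  by (simp add: mdeg_def)

lemma nth_mdeg: "i < r \<Longrightarrow> mdeg r n m ! i = int (\<Sum>j\<le>n i. Poly_Mapping.lookup m (i, j))"
  by (simp add: mdeg_def)

lemma nth_mdeg_add: "i < r \<Longrightarrow> mdeg r n (a + b) ! i = mdeg r n a ! i + mdeg r n b ! i"
  by (simp add: nth_mdeg lookup_add sum.distrib)

lemma length_deg_sub[simp]: "length (deg_sub d e) = min (length d) (length e)"
  by (simp add: deg_sub_def)

lemma nth_deg_sub: "i < length d \<Longrightarrow> i < length e \<Longrightarrow> deg_sub d e ! i = d ! i - e ! i"
  by (simp add: deg_sub_def)

lemma length_pdeg[simp]: "length (pdeg r n f) = r"
  by (simp add: pdeg_def)

lemma hom_keys:
  assumes "f \<noteq> 0" "multihomogeneous r n f" "m \<in> Poly_Mapping.keys f"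
  shows "mdeg r n m = pdeg r n f"
proof -
  obtain e where e: "\<forall>m\<in>Poly_Mapping.keys f. mdeg r n m = e"
    using assms(2) unfolding multihomogeneous_def by blast
  have "(SOME m. m \<in> Poly_Mapping.keys f) \<in> Poly_Mapping.keys f"
    using assms(1) by (metis keys_eq_empty ex_in_conv someI_ex)
  then show ?thesis using e assms(3) unfolding pdeg_def by auto
qed

lemma finite_vars: "finite (vars r n)"
proof -
  have "vars r n = Sigma {..<r} (\<lambda>i. {..n i})" by (auto simp: vars_def)
  then show ?thesis by simp
qed

lemma finite_monoms_deg: "finite (monoms_deg r n e)"
proof -
  let ?V = "vars r n"
  let ?T = "PiE ?V (\<lambda>(i,j). {0..nat (e ! i)})"
  have fin: "finite ?T" by (rule finite_PiE[OF finite_vars]) auto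
  have inj: "inj_on (\<lambda>m. restrict (Poly_Mapping.lookup m) ?V) (monoms_deg r n e)"
  proof (rule inj_onI)
    fix a b assume a: "a \<in> monoms_deg r n e" and b: "b \<in> monoms_deg r n e"
      and eq: "restrict (Poly_Mapping.lookup a) ?V = restrict (Poly_Mapping.lookup b) ?V"
    show "a = b"
    proof (rule poly_mapping_eqI)
      fix k show "Poly_Mapping.lookup a k = Poly_Mapping.lookup b k"
      proof (cases "k \<in> ?V")
        case True then show ?thesis using fun_cong[OF eq, of k] by simp
      next
        case False
        then have "k \<notin> Poly_Mapping.keys a" "k \<notin> Poly_Mapping.keys b"
          using a b by (auto simp: monoms_deg_def monoms_def)
        then show ?thesis by (simp add: in_keys_iff)
      qed
    qed
  qed
  have sub: "(\<lambda>m. restrict (Poly_Mapping.lookup m) ?V) ` monoms_deg r n e \<subseteq> ?T"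
  proof
    fix x assume "x \<in> (\<lambda>m. restrict (Poly_Mapping.lookup m) ?V) ` monoms_deg r n e"
    then obtain m where m: "m \<in> monoms_deg r n e" and x: "x = restrict (Poly_Mapping.lookup m) ?V" by auto
    have "Poly_Mapping.lookup m (i, j) \<le> nat (e ! i)" if ij: "(i, j) \<in> ?V" for i j
    proof -
      have i: "i < r" "j \<le> n i" using ij by (auto simp: vars_def)
      have "e ! i = int (\<Sum>j\<le>n i. Poly_Mapping.lookup m (i, j))"
        using m i nth_mdeg[of i r n m] by (auto simp: monoms_deg_def)
      moreover have "Poly_Mapping.lookup m (i, j) \<le> (\<Sum>j\<le>n i. Poly_Mapping.lookup m (i, j))"
        using i by (intro member_le_sum) auto
      ultimately show ?thesis by (metis nat_int)
    qed
    then show "x \<in> ?T" unfolding x by (auto simp: PiE_def)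
  qed
  show ?thesis using finite_imageD[OF finite_subset[OF sub fin] inj] .
qed

locale mo =
  fixes r :: nat and n :: "nat \<Rightarrow> nat" and ord :: "mon \<Rightarrow> mon \<Rightarrow> bool"
  assumes mo: "monomial_order r n ord"
begin

lemma irr: "a \<in> monoms r n \<Longrightarrow> \<not> ord a a"
  using mo unfolding monomial_order_def by blast
lemma trans: "a \<in> monoms r n \<Longrightarrow> b \<in> monoms r n \<Longrightarrow> c \<in> monoms r n \<Longrightarrow> ord a b \<Longrightarrow> ord b c \<Longrightarrow> ord a c"
  using mo unfolding monomial_order_def by blast
lemma total: "a \<in> monoms r n \<Longrightarrow> b \<in> monoms r n \<Longrightarrow> a = b \<or> ord a b \<or> ord b a"
  using mo unfolding monomial_order_def by blast
lemma wfW: "wf {(a, b). a \<in> monoms r n \<and> b \<in> monoms r n \<and> ord a b}"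
  using mo unfolding monomial_order_def by blast

lemma lm_prop:
  assumes "p \<noteq> 0" "Poly_Mapping.keys p \<subseteq> monoms r n"
  shows "lm ord p \<in> Poly_Mapping.keys p \<and> (\<forall>m'\<in>Poly_Mapping.keys p. m' \<noteq> lm ord p \<longrightarrow> ord m' (lm ord p))"
proof -
  let ?S = "Poly_Mapping.keys p"
  obtain m where m: "m \<in> ?S" "\<forall>x\<in>?S. x \<noteq> m \<longrightarrow> ord x m"
  proof -
    have t1: "\<forall>a\<in>?S. \<forall>b\<in>?S. a = b \<or> ord b a \<or> ord a b"
    proof (intro ballI)
      fix a b assume "a \<in> ?S" "b \<in> ?S"
      then have "a \<in> monoms r n" "b \<in> monoms r n" using assms(2) by auto
      then show "a = b \<or> ord b a \<or> ord a b" using total by blast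
    qed
    have t2: "\<forall>a\<in>?S. \<forall>b\<in>?S. \<forall>c\<in>?S. ord b a \<longrightarrow> ord c b \<longrightarrow> ord c a"
    proof (intro ballI impI)
      fix a b c assume "a \<in> ?S" "b \<in> ?S" "c \<in> ?S" "ord b a" "ord c b"
      moreover then have "a \<in> monoms r n" "b \<in> monoms r n" "c \<in> monoms r n" using assms(2) by auto
      ultimately show "ord c a" using trans by blast
    qed
    have "?S \<noteq> {}" using assms(1) by simp
    then show ?thesis using ex_first[of ?S "\<lambda>a b. ord b a", OF finite_keys _ t1 t2] that by blast
  qed
  have "\<exists>!m. m \<in> ?S \<and> (\<forall>m'\<in>?S. m' \<noteq> m \<longrightarrow> ord m' m)"
  proof (rule ex1I[of _ m])
    show "m \<in> ?S \<and> (\<forall>m'\<in>?S. m' \<noteq> m \<longrightarrow> ord m' m)" using m by blast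
    fix y assume y: "y \<in> ?S \<and> (\<forall>m'\<in>?S. m' \<noteq> y \<longrightarrow> ord m' y)"
    show "y = m"
    proof (rule ccontr)
      assume "y \<noteq> m"
      then have "ord y m" "ord m y" using m y by auto
      moreover have "y \<in> monoms r n" "m \<in> monoms r n" using assms(2) m y by auto
      ultimately show False using trans irr by blast
    qed
  qed
  then show ?thesis unfolding lm_def by (rule theI')
qed

lemma dec_list_set:
  assumes "finite B" "B \<subseteq> monoms r n"
  shows "set (dec_list ord B) = B"
proof -
  have "\<exists>bs. distinct bs \<and> set bs = B \<and> sorted_wrt (\<lambda>a b. ord b a) bs"
  proof (rule ex_sorted[OF assms(1)])
    show "\<forall>a\<in>B. \<forall>b\<in>B. a = b \<or> ord b a \<or> ord a b"
    proof (intro ballI)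
      fix a b assume "a \<in> B" "b \<in> B"
      then have "a \<in> monoms r n" "b \<in> monoms r n" using assms(2) by auto
      then show "a = b \<or> ord b a \<or> ord a b" using total by blast
    qed
    show "\<forall>a\<in>B. \<forall>b\<in>B. \<forall>c\<in>B. ord b a \<longrightarrow> ord c b \<longrightarrow> ord c a"
    proof (intro ballI impI)
      fix a b c assume "a \<in> B" "b \<in> B" "c \<in> B" "ord b a" "ord c b"
      moreover then have "a \<in> monoms r n" "b \<in> monoms r n" "c \<in> monoms r n" using assms(2) by auto
      ultimately show "ord c a" using trans by blast
    qed
  qed
  then show ?thesis unfolding dec_list_def by (metis (mono_tags, lifting) someI_ex)
qed

end


definition okfs :: "nat \<Rightarrow> (nat \<Rightarrow> nat) \<Rightarrow> 'k::zero mpoly list \<Rightarrow> bool" where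
  "okfs r n fs \<longleftrightarrow> (\<forall>f\<in>set fs. f \<in> polys r n \<and> f \<noteq> 0 \<and> multihomogeneous r n f)"

definition Gs :: "nat \<Rightarrow> (nat \<Rightarrow> nat) \<Rightarrow> 'k::comm_ring_1 mpoly list \<Rightarrow> int list \<Rightarrow> 'k mpoly set" where
  "Gs r n fs d = {Poly_Mapping.single b 1 * f | f b. f \<in> set fs \<and> b \<in> monoms_deg r n (deg_sub d (pdeg r n f))}"

lemma monoms_add: "a \<in> monoms r n \<Longrightarrow> b \<in> monoms r n \<Longrightarrow> a + b \<in> monoms r n"
  unfolding monoms_def using keys_add[of a b] by auto

lemma polys_add: "p \<in> polys r n \<Longrightarrow> q \<in> polys r n \<Longrightarrow> p + q \<in> polys r n"
  unfolding polys_def using keys_add[of p q] by auto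

lemma polys_zero: "0 \<in> polys r n"
  unfolding polys_def by simp

lemma polys_mult: "p \<in> polys r n \<Longrightarrow> q \<in> polys r n \<Longrightarrow> (p::'k::comm_ring_1 mpoly) * q \<in> polys r n"
proof -
  assume p: "p \<in> polys r n" and q: "q \<in> polys r n"
  have "x \<in> monoms r n" if x: "x \<in> Poly_Mapping.keys (p * q)" for x
  proof -
    obtain a b where "x = a + b" "a \<in> Poly_Mapping.keys p" "b \<in> Poly_Mapping.keys q"
      using keys_mult[of p q] x by blast
    then show ?thesis using p q monoms_add[of a r n b] unfolding polys_def by auto
  qed
  then show ?thesis unfolding polys_def by auto
qed

lemma polys_smul: "p \<in> polys r n \<Longrightarrow> Poly_Mapping.single 0 (c::'k::field) * p \<in> polys r n"
  unfolding polys_def using keys_smul[of c p] by auto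

lemma polys_single: "b \<in> monoms r n \<Longrightarrow> Poly_Mapping.single b c \<in> polys r n"
  unfolding polys_def by simp

lemma subspace_polys: "V.subspace (polys r n :: 'k::field mpoly set)"
  unfolding V.subspace_def by (simp add: polys_zero polys_add polys_smul)

lemma subspace_polys_deg: "V.subspace (polys_deg r n d :: 'k::field mpoly set)"
  unfolding V.subspace_def polys_deg_def
proof (intro conjI ballI allI)
  fix x y :: "'k mpoly" assume "x \<in> {p. Poly_Mapping.keys p \<subseteq> monoms_deg r n d}" "y \<in> {p. Poly_Mapping.keys p \<subseteq> monoms_deg r n d}"
  then show "x + y \<in> {p. Poly_Mapping.keys p \<subseteq> monoms_deg r n d}" using keys_add[of x y] by auto
next
  fix c and x :: "'k mpoly" assume "x \<in> {p. Poly_Mapping.keys p \<subseteq> monoms_deg r n d}"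
  then show "Poly_Mapping.single 0 c * x \<in> {p. Poly_Mapping.keys p \<subseteq> monoms_deg r n d}" using keys_smul[of c x] by auto
qed simp

lemma ideal_gen_iff:
  "p \<in> ideal_gen r n fs \<longleftrightarrow> (\<exists>g. (\<forall>i<length fs. g i \<in> polys r n) \<and> p = (\<Sum>i<length fs. g i * fs ! i))"
proof
  assume "p \<in> ideal_gen r n fs"
  then obtain gs where gs: "length gs = length fs" "set gs \<subseteq> polys r n" "p = sum_list (map2 (*) gs fs)"
    unfolding ideal_gen_def by blast
  have "p = (\<Sum>i<length fs. gs ! i * fs ! i)"
    using gs by (simp add: sum_list_sum_nth atLeast0LessThan)
  then show "\<exists>g. (\<forall>i<length fs. g i \<in> polys r n) \<and> p = (\<Sum>i<length fs. g i * fs ! i)"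
    using gs by (intro exI[of _ "nth gs"]) auto
next
  assume "\<exists>g. (\<forall>i<length fs. g i \<in> polys r n) \<and> p = (\<Sum>i<length fs. g i * fs ! i)"
  then obtain g where g: "\<forall>i<length fs. g i \<in> polys r n" "p = (\<Sum>i<length fs. g i * fs ! i)" by blast
  let ?gs = "map g [0..<length fs]"
  have "sum_list (map2 (*) ?gs fs) = (\<Sum>i<length fs. g i * fs ! i)"
    by (simp add: sum_list_sum_nth atLeast0LessThan)
  then show "p \<in> ideal_gen r n fs" unfolding ideal_gen_def using g
    by (intro CollectI exI[of _ ?gs]) auto
qed

lemma subspace_ideal_gen: "V.subspace (ideal_gen r n (fs :: 'k::field mpoly list))"
  unfolding V.subspace_def
proof (intro conjI ballI allI)
  show "0 \<in> ideal_gen r n fs"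
    unfolding ideal_gen_iff by (intro exI[of _ "\<lambda>_. 0"]) (auto simp: polys_zero)
next
  fix x y assume "x \<in> ideal_gen r n fs" "y \<in> ideal_gen r n fs"
  then obtain g h where g: "\<forall>i<length fs. g i \<in> polys r n" "x = (\<Sum>i<length fs. g i * fs ! i)"
    and h: "\<forall>i<length fs. h i \<in> polys r n" "y = (\<Sum>i<length fs. h i * fs ! i)"
    unfolding ideal_gen_iff by blast
  show "x + y \<in> ideal_gen r n fs"
    unfolding ideal_gen_iff using g h
    by (intro exI[of _ "\<lambda>i. g i + h i"]) (auto simp: polys_add sum.distrib algebra_simps)
next
  fix c x assume "x \<in> ideal_gen r n fs"
  then obtain g where g: "\<forall>i<length fs. g i \<in> polys r n" "x = (\<Sum>i<length fs. g i * fs ! i)"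
    unfolding ideal_gen_iff by blast
  show "Poly_Mapping.single 0 c * x \<in> ideal_gen r n fs"
    unfolding ideal_gen_iff using g
    by (intro exI[of _ "\<lambda>i. Poly_Mapping.single 0 c * g i"]) (auto simp: polys_smul sum_distrib_left mult.assoc)
qed

lemma row_deg:
  assumes f: "(f::'k::comm_ring_1 mpoly) \<in> polys r n" "f \<noteq> 0" "multihomogeneous r n f"
    and b: "b \<in> monoms_deg r n (deg_sub d (pdeg r n f))" and d: "length d = r"
  shows "Poly_Mapping.single b 1 * f \<in> polys_deg r n d"
proof -
  have "x \<in> monoms_deg r n d" if x: "x \<in> Poly_Mapping.keys (Poly_Mapping.single b 1 * f)" for x
  proof -
    obtain m where m: "m \<in> Poly_Mapping.keys f" "x = b + m"
      using keys_single_mult[of b 1 f] x by auto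
    have mm: "m \<in> monoms r n" using f m unfolding polys_def by auto
    have bm: "b \<in> monoms r n" using b unfolding monoms_deg_def by auto
    have md: "mdeg r n m = pdeg r n f" using hom_keys f m by blast
    have bd: "mdeg r n b = deg_sub d (pdeg r n f)" using b unfolding monoms_deg_def by auto
    have "mdeg r n x = d"
    proof (rule nth_eqI[of _ r])
      fix i assume i: "i < r"
      have "mdeg r n b ! i = d ! i - pdeg r n f ! i" using bd i d by (simp add: nth_deg_sub)
      then show "mdeg r n x ! i = d ! i" using i m(2) nth_mdeg_add[of i r n b m] md by simp
    qed (use d in auto)
    then show ?thesis using monoms_add[OF bm mm] m(2) unfolding monoms_deg_def by auto
  qed
  then show ?thesis unfolding polys_deg_def by auto
qed

lemma polys_deg_polys: "polys_deg r n d \<subseteq> polys r n"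
  unfolding polys_deg_def polys_def monoms_deg_def by auto

lemma Gs_sub_ideal_deg:
  assumes "okfs r n fs" "length d = r"
  shows "Gs r n fs d \<subseteq> ideal_deg r n (fs :: 'k::field mpoly list) d"
proof
  fix x assume "x \<in> Gs r n fs d"
  then obtain f b where x: "x = Poly_Mapping.single b 1 * f" and f: "f \<in> set fs"
    and b: "b \<in> monoms_deg r n (deg_sub d (pdeg r n f))" unfolding Gs_def by blast
  have fp: "f \<in> polys r n" "f \<noteq> 0" "multihomogeneous r n f" using assms f unfolding okfs_def by auto
  obtain k where k: "k < length fs" "fs ! k = f" using f by (metis in_set_conv_nth)
  have bm: "b \<in> monoms r n" using b unfolding monoms_deg_def by auto
  have "x \<in> ideal_gen r n fs"
    unfolding ideal_gen_iff
  proof (intro exI[of _ "\<lambda>i. if i = k then Poly_Mapping.single b 1 else 0"] conjI allI impI)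
    show "(if i = k then Poly_Mapping.single b 1 else 0) \<in> polys r n" for i
      using polys_single[OF bm] polys_zero by auto
    show "x = (\<Sum>i<length fs. (if i = k then Poly_Mapping.single b 1 else 0) * fs ! i)"
    proof -
      have "(\<Sum>i<length fs. (if i = k then Poly_Mapping.single b 1 else 0) * fs ! i)
          = (\<Sum>i<length fs. if i = k then Poly_Mapping.single b 1 * fs ! i else 0)"
        by (rule sum.cong) auto
      also have "\<dots> = Poly_Mapping.single b 1 * f" using k by (simp add: sum.delta)
      finally show ?thesis using x by simp
    qed
  qed
  moreover have "x \<in> polys_deg r n d" using row_deg[OF fp b assms(2)] x by simp
  ultimately show "x \<in> ideal_deg r n fs d" unfolding ideal_deg_def by blast
qed



definition proj :: "nat \<Rightarrow> (nat \<Rightarrow> nat) \<Rightarrow> int list \<Rightarrow> 'k::zero mpoly \<Rightarrow> 'k mpoly" where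
  "proj r n d q = Abs_poly_mapping (\<lambda>k. if mdeg r n k = d then Poly_Mapping.lookup q k else 0)"

lemma lookup_proj: "Poly_Mapping.lookup (proj r n d q) k = (if mdeg r n k = d then Poly_Mapping.lookup q k else 0)"
proof -
  have "finite {k. (if mdeg r n k = d then Poly_Mapping.lookup q k else 0) \<noteq> 0}"
    by (rule finite_subset[OF _ finite_keys[of q]]) (auto simp: in_keys_iff)
  then show ?thesis unfolding proj_def by simp
qed

lemma proj_add: "proj r n d (p + q) = proj r n d p + proj r n d (q :: 'k::comm_ring_1 mpoly)"
  by (rule poly_mapping_eqI) (simp add: lookup_proj lookup_add)

lemma proj_smul: "proj r n d (Poly_Mapping.single 0 c * q) = Poly_Mapping.single 0 c * proj r n d (q :: 'k::comm_ring_1 mpoly)"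
  by (rule poly_mapping_eqI) (simp add: lookup_proj)

lemma proj_0: "proj r n d (0 :: 'k::comm_ring_1 mpoly) = 0"
  by (rule poly_mapping_eqI) (simp add: lookup_proj)

lemma proj_id: "Poly_Mapping.keys q \<subseteq> {k. mdeg r n k = d} \<Longrightarrow> proj r n d q = (q :: 'k::comm_ring_1 mpoly)"
  by (rule poly_mapping_eqI) (auto simp: lookup_proj in_keys_iff)

lemma proj_null: "\<forall>k\<in>Poly_Mapping.keys q. mdeg r n k \<noteq> d \<Longrightarrow> proj r n d q = (0 :: 'k::comm_ring_1 mpoly)"
  by (rule poly_mapping_eqI) (auto simp: lookup_proj in_keys_iff)

lemma proj_in_span:
  assumes "q \<in> V.span X" "\<forall>x\<in>X. proj r n d x \<in> V.span Y"
  shows "proj r n d (q :: 'k::comm_ring_1 mpoly) \<in> V.span Y"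
  using assms(1)
proof (induction rule: V.span_induct_alt)
  case base
  then show ?case by (simp add: proj_0 V.span_zero)
next
  case (step c x y)
  then show ?case using assms(2)
    by (simp add: proj_add proj_smul V.span_add V.span_scale)
qed

lemma ideal_deg_sub_span:
  assumes ok: "okfs r n fs" and d: "length d = r"
  shows "ideal_deg r n (fs :: 'k::field mpoly list) d \<subseteq> V.span (Gs r n fs d)"
proof
  fix p assume p: "p \<in> ideal_deg r n fs d"
  let ?X = "{Poly_Mapping.single m 1 * f | f m. f \<in> set fs \<and> m \<in> monoms r n} :: 'k mpoly set"
  obtain g where g: "\<forall>i<length fs. g i \<in> polys r n" "p = (\<Sum>i<length fs. g i * fs ! i)"
    using p ideal_gen_iff[of p r n fs] unfolding ideal_deg_def by blast
  have pX: "p \<in> V.span ?X"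
    unfolding g(2)
  proof (rule V.span_sum)
    fix i assume i: "i \<in> {..<length fs}"
    have "g i * fs ! i = (\<Sum>m\<in>Poly_Mapping.keys (g i). Poly_Mapping.single m (Poly_Mapping.lookup (g i) m)) * fs ! i"
      by (subst poly_expand[of "g i"]) simp
    also have "\<dots> = (\<Sum>m\<in>Poly_Mapping.keys (g i). Poly_Mapping.single 0 (Poly_Mapping.lookup (g i) m) * (Poly_Mapping.single m 1 * fs ! i))"
      unfolding sum_distrib_right
      by (rule sum.cong[OF refl], subst single_eq_smul) (simp add: mult.assoc)
    also have "\<dots> \<in> V.span ?X"
    proof (rule V.span_sum)
      fix m assume m: "m \<in> Poly_Mapping.keys (g i)"
      have "m \<in> monoms r n" using g(1) i m unfolding polys_def by auto
      moreover have "fs ! i \<in> set fs" using i by simp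
      ultimately have "Poly_Mapping.single m 1 * fs ! i \<in> ?X" by blast
      then show "Poly_Mapping.single 0 (Poly_Mapping.lookup (g i) m) * (Poly_Mapping.single m 1 * fs ! i) \<in> V.span ?X"
        by (intro V.span_scale V.span_base)
    qed
    finally show "g i * fs ! i \<in> V.span ?X" .
  qed
  have projX: "\<forall>x\<in>?X. proj r n d x \<in> V.span (Gs r n fs d)"
  proof
    fix x assume "x \<in> ?X"
    then obtain f m where x: "x = Poly_Mapping.single m 1 * f" and f: "f \<in> set fs" and m: "m \<in> monoms r n" by blast
    have fp: "f \<in> polys r n" "f \<noteq> 0" "multihomogeneous r n f" using ok f unfolding okfs_def by auto
    show "proj r n d x \<in> V.span (Gs r n fs d)"
    proof (cases "mdeg r n m = deg_sub d (pdeg r n f)")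
      case True
      then have mm: "m \<in> monoms_deg r n (deg_sub d (pdeg r n f))" using m unfolding monoms_deg_def by auto
      have "x \<in> polys_deg r n d" using row_deg[OF fp mm d] x by simp
      then have "proj r n d x = x" by (intro proj_id) (auto simp: polys_deg_def monoms_deg_def)
      moreover have "x \<in> Gs r n fs d" unfolding Gs_def using x f mm by blast
      ultimately show ?thesis by (simp add: V.span_base)
    next
      case False
      have "\<forall>k\<in>Poly_Mapping.keys x. mdeg r n k \<noteq> d"
      proof (intro ballI notI)
        fix k assume k: "k \<in> Poly_Mapping.keys x" and kd: "mdeg r n k = d"
        obtain m' where m': "m' \<in> Poly_Mapping.keys f" "k = m + m'"
          using keys_single_mult[of m 1 f] k x by auto
        have md: "mdeg r n m' = pdeg r n f" using hom_keys fp m' by blast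
        have "mdeg r n m = deg_sub d (pdeg r n f)"
        proof (rule nth_eqI[of _ r])
          fix i assume i: "i < r"
          have "mdeg r n k ! i = mdeg r n m ! i + mdeg r n m' ! i" using m'(2) nth_mdeg_add[OF i] by simp
          then show "mdeg r n m ! i = deg_sub d (pdeg r n f) ! i"
            using kd md i d by (simp add: nth_deg_sub)
        qed (use d in auto)
        then show False using False by simp
      qed
      then have "proj r n d x = 0" by (rule proj_null)
      then show ?thesis by (simp add: V.span_zero)
    qed
  qed
  have "proj r n d p = p"
    using p by (intro proj_id) (auto simp: ideal_deg_def polys_deg_def monoms_deg_def)
  then show "p \<in> V.span (Gs r n fs d)" using proj_in_span[OF pX projX] by simp
qed

lemma ideal_deg_eq_span:
  assumes ok: "okfs r n fs" and d: "length d = r"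
  shows "ideal_deg r n (fs :: 'k::field mpoly list) d = V.span (Gs r n fs d)"
proof
  show "ideal_deg r n fs d \<subseteq> V.span (Gs r n fs d)" by (rule ideal_deg_sub_span[OF ok d])
  have "V.subspace (ideal_deg r n fs d)"
    unfolding ideal_deg_def by (intro V.subspace_inter subspace_ideal_gen subspace_polys_deg)
  then show "V.span (Gs r n fs d) \<subseteq> ideal_deg r n fs d"
    by (intro V.span_minimal Gs_sub_ideal_deg[OF ok d])
qed

lemma span_mult_monom:
  assumes ok: "okfs r n fs" and h: "h \<in> V.span (Gs r n fs e)" and m: "m \<in> monoms r n"
    and e: "length e = r" and d: "length d = r" and de: "\<forall>i<r. d ! i = e ! i + mdeg r n m ! i"
  shows "Poly_Mapping.single m 1 * h \<in> V.span (Gs r n (fs :: 'k::field mpoly list) d)"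
  using h
proof (induction rule: V.span_induct_alt)
  case base
  then show ?case by (simp add: V.span_zero)
next
  case (step c x y)
  from step(1) obtain f b where x: "x = Poly_Mapping.single b 1 * f" and f: "f \<in> set fs"
    and b: "b \<in> monoms_deg r n (deg_sub e (pdeg r n f))" unfolding Gs_def by blast
  have "m + b \<in> monoms_deg r n (deg_sub d (pdeg r n f))"
  proof -
    have "m + b \<in> monoms r n" using monoms_add[OF m] b unfolding monoms_deg_def by auto
    moreover have "mdeg r n (m + b) = deg_sub d (pdeg r n f)"
    proof (rule nth_eqI[of _ r])
      fix i assume i: "i < r"
      have "mdeg r n b ! i = e ! i - pdeg r n f ! i" using b i e unfolding monoms_deg_def by (simp add: nth_deg_sub)
      then show "mdeg r n (m + b) ! i = deg_sub d (pdeg r n f) ! i"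
        using nth_mdeg_add[OF i, of n m b] de i d by (simp add: nth_deg_sub)
    qed (use d in auto)
    ultimately show ?thesis unfolding monoms_deg_def by auto
  qed
  then have "Poly_Mapping.single (m + b) 1 * f \<in> Gs r n fs d" unfolding Gs_def using f by blast
  moreover have "Poly_Mapping.single m 1 * x = Poly_Mapping.single (m + b) 1 * f"
    unfolding x by (simp add: mult.assoc[symmetric] mult_single)
  ultimately have "Poly_Mapping.single m 1 * x \<in> V.span (Gs r n fs d)" by (simp add: V.span_base)
  moreover have "Poly_Mapping.single m 1 * (Poly_Mapping.single 0 c * x + y)
      = Poly_Mapping.single 0 c * (Poly_Mapping.single m 1 * x) + Poly_Mapping.single m 1 * y"
    by (simp add: distrib_left mult.left_commute)
  ultimately show ?case using step(2) by (simp add: V.span_add V.span_scale)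
qed

lemma span_mult_poly:
  assumes ok: "okfs r n fs" and g: "g \<in> V.span (Gs r n fs e)"
    and f: "f \<in> polys r n" "f \<noteq> 0" "multihomogeneous r n f"
    and e: "e = deg_sub d (pdeg r n f)" and d: "length d = r"
  shows "g * f \<in> V.span (Gs r n (fs :: 'k::field mpoly list) d)"
proof -
  have "g * f = g * (\<Sum>m\<in>Poly_Mapping.keys f. Poly_Mapping.single m (Poly_Mapping.lookup f m))"
    by (subst poly_expand[of f]) simp
  also have "\<dots> = (\<Sum>m\<in>Poly_Mapping.keys f. Poly_Mapping.single 0 (Poly_Mapping.lookup f m) * (Poly_Mapping.single m 1 * g))"
    unfolding sum_distrib_left
    by (rule sum.cong[OF refl], subst single_eq_smul) (simp add: mult_ac)
  also have "\<dots> \<in> V.span (Gs r n fs d)"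
  proof (rule V.span_sum)
    fix m assume m: "m \<in> Poly_Mapping.keys f"
    have mm: "m \<in> monoms r n" using f m unfolding polys_def by auto
    have md: "mdeg r n m = pdeg r n f" using hom_keys f m by blast
    have le: "length e = r" using e d by simp
    have "\<forall>i<r. d ! i = e ! i + mdeg r n m ! i" using e d md by (simp add: nth_deg_sub)
    then have "Poly_Mapping.single m 1 * g \<in> V.span (Gs r n fs d)"
      by (rule span_mult_monom[OF ok g mm le d])
    then show "Poly_Mapping.single 0 (Poly_Mapping.lookup f m) * (Poly_Mapping.single m 1 * g) \<in> V.span (Gs r n fs d)"
      by (rule V.span_scale)
  qed
  finally show ?thesis .
qed



lemma keys_diff_sub: "k \<in> Poly_Mapping.keys (q - y) \<Longrightarrow> k \<in> Poly_Mapping.keys q \<or> k \<in> Poly_Mapping.keys (y :: 'k::comm_ring_1 mpoly)"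
  by (auto simp: in_keys_iff lookup_minus)

lemma polys_diff: "(p::'k::comm_ring_1 mpoly) \<in> polys r n \<Longrightarrow> q \<in> polys r n \<Longrightarrow> p - q \<in> polys r n"
  unfolding polys_def using keys_diff_sub[of _ p q] by blast

lemma span_insert_same:
  assumes "V.span A = V.span (C :: 'k::comm_ring_1 mpoly set)"
  shows "V.span (insert q A) = V.span (insert q C)"
proof -
  have "A \<subseteq> V.span (insert q C)"
    using V.span_superset[of A] assms V.span_mono[of C "insert q C"] by blast
  moreover have "C \<subseteq> V.span (insert q A)"
    using V.span_superset[of C] assms V.span_mono[of A "insert q A"] by blast
  ultimately show ?thesis unfolding V.span_eq by (auto intro: V.span_base)
qed

context mo
begin

lemma reduce:
  assumes B: "B \<subseteq> (polys r n - {0} :: 'k::field mpoly set)"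
  shows "q \<in> polys r n \<Longrightarrow> \<exists>q'. q' \<in> polys r n \<and> q - q' \<in> V.span B \<and> (q' = 0 \<or> lm ord q' \<notin> lm ord ` B)"
proof -
  let ?W = "{(a, b). a \<in> monoms r n \<and> b \<in> monoms r n \<and> ord a b}"
  have main: "\<forall>q. q \<in> polys r n \<longrightarrow> q \<noteq> 0 \<longrightarrow> lm ord q = \<mu> \<longrightarrow>
      (\<exists>q'. q' \<in> polys r n \<and> q - q' \<in> V.span B \<and> (q' = 0 \<or> lm ord q' \<notin> lm ord ` B))" for \<mu>
  proof (induction \<mu> rule: wf_induct[OF wfW])
    case (1 \<mu>)
    show ?case
    proof (intro allI impI)
      fix q :: "'k mpoly" assume q: "q \<in> polys r n" "q \<noteq> 0" "lm ord q = \<mu>"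
      have qk: "Poly_Mapping.keys q \<subseteq> monoms r n" using q unfolding polys_def by auto
      note lq = lm_prop[OF q(2) qk]
      show "\<exists>q'. q' \<in> polys r n \<and> q - q' \<in> V.span B \<and> (q' = 0 \<or> lm ord q' \<notin> lm ord ` B)"
      proof (cases "\<mu> \<in> lm ord ` B")
        case False
        then show ?thesis using q by (intro exI[of _ q]) (auto simp: V.span_zero)
      next
        case True
        then obtain b where b: "b \<in> B" "lm ord b = \<mu>" by auto
        have bp: "b \<in> polys r n" "b \<noteq> 0" using B b by auto
        have bk: "Poly_Mapping.keys b \<subseteq> monoms r n" using bp unfolding polys_def by auto
        note lb = lm_prop[OF bp(2) bk]
        define c where "c = Poly_Mapping.lookup q \<mu> / Poly_Mapping.lookup b \<mu>"
        define q1 where "q1 = q - Poly_Mapping.single 0 c * b"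
        have bnz: "Poly_Mapping.lookup b \<mu> \<noteq> 0" using lb b(2) by (simp add: in_keys_iff)
        have q1\<mu>: "Poly_Mapping.lookup q1 \<mu> = 0"
          unfolding q1_def c_def using bnz by (simp add: lookup_minus)
        have q1p: "q1 \<in> polys r n" unfolding q1_def using q(1) polys_smul[OF bp(1)] by (rule polys_diff)
        have cb: "Poly_Mapping.single 0 c * b \<in> V.span B" using b(1) by (intro V.span_scale V.span_base)
        show ?thesis
        proof (cases "q1 = 0")
          case True
          then have "q - 0 \<in> V.span B" using cb unfolding q1_def by simp
          then show ?thesis by (intro exI[of _ 0]) (auto simp: polys_zero)
        next
          case False
          have q1k: "Poly_Mapping.keys q1 \<subseteq> monoms r n" using q1p unfolding polys_def by auto
          note l1 = lm_prop[OF False q1k]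
          have lk: "lm ord q1 \<in> Poly_Mapping.keys q \<or> lm ord q1 \<in> Poly_Mapping.keys b"
            using l1 keys_diff_sub[of "lm ord q1" q "Poly_Mapping.single 0 c * b"] keys_smul[of c b]
            unfolding q1_def by blast
          have ne: "lm ord q1 \<noteq> \<mu>" using l1 q1\<mu> by (auto simp: in_keys_iff)
          have "ord (lm ord q1) \<mu>" using lk ne lq lb q(3) b(2) by auto
          moreover have "lm ord q1 \<in> monoms r n" "\<mu> \<in> monoms r n" using l1 q1k lq qk q(3) by auto
          ultimately have "(lm ord q1, \<mu>) \<in> ?W" by simp
          then obtain q'' where q'': "q'' \<in> polys r n" "q1 - q'' \<in> V.span B" "q'' = 0 \<or> lm ord q'' \<notin> lm ord ` B"
            using 1 q1p False by blast
          have eq: "q - q'' = (q1 - q'') + Poly_Mapping.single 0 c * b" unfolding q1_def by simp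
          have "(q1 - q'') + Poly_Mapping.single 0 c * b \<in> V.span B"
            using q''(2) cb by (rule V.span_add)
          then have "q - q'' \<in> V.span B" by (simp only: eq)
          then show ?thesis using q'' by blast
        qed
      qed
    qed
  qed
  assume q: "q \<in> polys r n"
  show ?thesis
  proof (cases "q = 0")
    case True
    then show ?thesis by (intro exI[of _ 0]) (auto simp: polys_zero V.span_zero)
  next
    case False
    then show ?thesis using main q by blast
  qed
qed

lemma basis_exists:
  "set R \<subseteq> polys r n \<Longrightarrow> \<exists>B :: 'k::field mpoly set. finite B \<and> B \<subseteq> polys r n - {0} \<and> inj_on (lm ord) B \<and> card B \<le> length R
      \<and> V.span B = V.span (set R)"
proof (induction R)
  case Nil
  then show ?case by (intro exI[of _ "{}"]) auto
next
  case (Cons q R)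
  then obtain B where B: "finite B" "B \<subseteq> polys r n - {0}" "inj_on (lm ord) B" "card B \<le> length R"
    "V.span B = V.span (set R)" by auto
  have qp: "q \<in> polys r n" using Cons.prems by simp
  obtain q' where q': "q' \<in> polys r n" "q - q' \<in> V.span B" "q' = 0 \<or> lm ord q' \<notin> lm ord ` B"
    using reduce[OF B(2) qp] by blast
  have sp: "V.span (insert q B) = V.span (set (q # R))" using span_insert_same[OF B(5)] by simp
  show ?case
  proof (cases "q' = 0")
    case True
    then have "q \<in> V.span B" using q'(2) by simp
    then have "V.span (insert q B) = V.span B"
      unfolding V.span_eq using V.span_superset[of B] by (auto intro: V.span_base)
    then show ?thesis using B sp by (intro exI[of _ B]) auto
  next
    case False
    then have nb: "lm ord q' \<notin> lm ord ` B" using q'(3) by blast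
    then have qB: "q' \<notin> B" by blast
    have "V.span (insert q' B) = V.span (insert q B)"
      using V.eq_span_insert_eq[OF q'(2)] by simp
    then show ?thesis using B sp qB nb q' False
      by (intro exI[of _ "insert q' B"]) auto
  qed
qed

lemma echelon_exists:
  assumes R: "set R \<subseteq> polys r n"
  shows "\<exists>E. is_row_echelon_of ord R (E :: 'k::field mpoly list)"
proof -
  obtain B where B: "finite B" "B \<subseteq> polys r n - {0}" "inj_on (lm ord) B" "card B \<le> length R"
      "V.span B = V.span (set R)" using basis_exists[OF R] by blast
  have lmB: "lm ord p \<in> monoms r n" if "p \<in> B" for p
  proof -
    have "p \<noteq> 0" "Poly_Mapping.keys p \<subseteq> monoms r n" using B(2) that unfolding polys_def by auto
    then show ?thesis using lm_prop by blast
  qed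
  have "\<exists>bs. distinct bs \<and> set bs = B \<and> sorted_wrt (\<lambda>p q. ord (lm ord q) (lm ord p)) bs"
  proof (rule ex_sorted[OF B(1)])
    show "\<forall>a\<in>B. \<forall>b\<in>B. a = b \<or> ord (lm ord b) (lm ord a) \<or> ord (lm ord a) (lm ord b)"
    proof (intro ballI)
      fix a b assume ab: "a \<in> B" "b \<in> B"
      show "a = b \<or> ord (lm ord b) (lm ord a) \<or> ord (lm ord a) (lm ord b)"
      proof (cases "a = b")
        case False
        then have "lm ord a \<noteq> lm ord b" using B(3) ab by (meson inj_onD)
        then show ?thesis using total lmB ab by blast
      qed simp
    qed
    show "\<forall>a\<in>B. \<forall>b\<in>B. \<forall>c\<in>B. ord (lm ord b) (lm ord a) \<longrightarrow> ord (lm ord c) (lm ord b) \<longrightarrow> ord (lm ord c) (lm ord a)"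
    proof (intro ballI impI)
      fix a b c assume "a \<in> B" "b \<in> B" "c \<in> B" "ord (lm ord b) (lm ord a)" "ord (lm ord c) (lm ord b)"
      then show "ord (lm ord c) (lm ord a)" using trans lmB by blast
    qed
  qed
  then obtain bs where bs: "distinct bs" "set bs = B" "sorted_wrt (\<lambda>p q. ord (lm ord q) (lm ord p)) bs" by blast
  define E where "E = bs @ replicate (length R - card B) 0"
  have len: "length E = length R" unfolding E_def using bs distinct_card[OF bs(1)] B(4) by simp
  have "set E \<subseteq> insert 0 B" unfolding E_def using bs by auto
  moreover have "B \<subseteq> set E" unfolding E_def using bs by auto
  ultimately have "V.span (set E) = V.span B"
    unfolding V.span_eq by (auto intro: V.span_base V.span_zero)
  then have "lin_span (set E) = lin_span (set R)" using B(5) by (simp add: lin_span_eq)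
  moreover have "\<forall>p\<in>set bs. p \<noteq> 0" using bs B(2) by auto
  ultimately have "is_row_echelon_of ord R E"
    unfolding is_row_echelon_of_def using len bs(3) E_def by blast
  then show ?thesis by blast
qed

lemma lead_set_prop:
  assumes R: "set R \<subseteq> polys r n" and b: "\<beta> \<in> lead_set ord (R :: 'k::field mpoly list)"
  shows "\<exists>g. g \<in> V.span (set R) \<and> g \<noteq> 0 \<and> lm ord g = \<beta>"
proof -
  let ?E = "SOME E. is_row_echelon_of ord R (E :: 'k mpoly list)"
  have E: "is_row_echelon_of ord R ?E" using echelon_exists[OF R] by (rule someI_ex)
  obtain p where p: "p \<in> set ?E" "p \<noteq> 0" "lm ord p = \<beta>" using b unfolding lead_set_def Let_def by auto
  have "p \<in> V.span (set ?E)" using p(1) by (rule V.span_base)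
  also have "V.span (set ?E) = V.span (set R)" using E unfolding is_row_echelon_of_def lin_span_eq by blast
  finally show ?thesis using p by blast
qed

end


lemma Gs_cons: "Gs r n (f # fs) d = {Poly_Mapping.single b 1 * f | b. b \<in> monoms_deg r n (deg_sub d (pdeg r n f))} \<union> Gs r n fs d"
  unfolding Gs_def by auto

lemma Gs_nil: "Gs r n [] d = {}"
  unfolding Gs_def by auto

lemma Gs_rev: "Gs r n (rev fs) d = Gs r n fs d"
  unfolding Gs_def by simp

lemma span_Gs_polys:
  assumes "okfs r n fs" "length d = r"
  shows "V.span (Gs r n (fs :: 'k::field mpoly list) d) \<subseteq> polys r n"
  using ideal_deg_eq_span[OF assms] polys_deg_polys unfolding ideal_deg_def by blast

lemma span_Gs_polys_deg:
  assumes "okfs r n fs" "length d = r"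
  shows "V.span (Gs r n (fs :: 'k::field mpoly list) d) \<subseteq> polys_deg r n d"
  using ideal_deg_eq_span[OF assms] unfolding ideal_deg_def by blast

context mo
begin

lemma main_rev:
  "okfs r n fs \<Longrightarrow> fs \<noteq> [] \<Longrightarrow> length d = r \<Longrightarrow>
   V.span (set (M3H_rev r n ord fs d)) = V.span (Gs r n (fs :: 'k::field mpoly list) d)"
proof (induction fs arbitrary: d)
  case Nil
  then show ?case by simp
next
  case (Cons f fs')
  have okf: "f \<in> polys r n" "f \<noteq> 0" "multihomogeneous r n f" using Cons.prems(1) unfolding okfs_def by auto
  have ok': "okfs r n fs'" using Cons.prems(1) unfolding okfs_def by auto
  have d: "length d = r" by fact
  define e where "e = deg_sub d (pdeg r n f)"
  have le: "length e = r" unfolding e_def using d by simp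
  define L where "L = (if fs' = [] then {} else lead_set ord (M3H_rev r n ord fs' e))"
  define rows where "rows = M3H_rev r n ord (f # fs') d"
  have rows: "rows = M3H_rev r n ord fs' d @
      map (\<lambda>\<beta>. Poly_Mapping.single \<beta> 1 * f) (dec_list ord (monoms_deg r n e - L))"
    unfolding rows_def L_def e_def by (simp add: Let_def)
  have dl: "set (dec_list ord (monoms_deg r n e - L)) = monoms_deg r n e - L"
    by (rule dec_list_set) (use finite_monoms_deg in \<open>auto simp: monoms_deg_def\<close>)
  let ?SR = "V.span (set rows)"
  have IHd: "fs' \<noteq> [] \<Longrightarrow> V.span (set (M3H_rev r n ord fs' d)) = V.span (Gs r n fs' d)"
    using Cons.IH[OF ok' _ d] by blast
  have IHe: "fs' \<noteq> [] \<Longrightarrow> V.span (set (M3H_rev r n ord fs' e)) = V.span (Gs r n fs' e)"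
    using Cons.IH[OF ok' _ le] by blast
  have old_sub: "V.span (Gs r n fs' d) \<subseteq> ?SR"
  proof (cases "fs' = []")
    case True
    then show ?thesis by (simp add: Gs_nil V.span_zero)
  next
    case False
    then show ?thesis using IHd[OF False] rows V.span_mono[of "set (M3H_rev r n ord fs' d)" "set rows"] by auto
  qed
  have top: "\<beta> \<in> monoms_deg r n e \<longrightarrow> Poly_Mapping.single \<beta> 1 * f \<in> ?SR" for \<beta>
  proof (induction \<beta> rule: wf_induct[OF wfW])
    case (1 \<beta>)
    show ?case
    proof
      assume b: "\<beta> \<in> monoms_deg r n e"
      show "Poly_Mapping.single \<beta> 1 * f \<in> ?SR"
      proof (cases "\<beta> \<in> L")
        case False
        then have "Poly_Mapping.single \<beta> 1 * f \<in> set rows" using rows dl b by auto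
        then show ?thesis by (rule V.span_base)
      next
        case True
        then have ne: "fs' \<noteq> []" unfolding L_def by (auto split: if_splits)
        then have bL: "\<beta> \<in> lead_set ord (M3H_rev r n ord fs' e)" using True unfolding L_def by simp
        have Rp: "set (M3H_rev r n ord fs' e) \<subseteq> polys r n"
          using V.span_superset[of "set (M3H_rev r n ord fs' e)"] IHe[OF ne] span_Gs_polys[OF ok' le] by blast
        obtain g where g: "g \<in> V.span (set (M3H_rev r n ord fs' e))" "g \<noteq> 0" "lm ord g = \<beta>"
          using lead_set_prop[OF Rp bL] by blast
        have gG: "g \<in> V.span (Gs r n fs' e)" using g(1) IHe[OF ne] by simp
        have gk: "Poly_Mapping.keys g \<subseteq> monoms_deg r n e"
          using span_Gs_polys_deg[OF ok' le] gG unfolding polys_deg_def by blast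
        have gk': "Poly_Mapping.keys g \<subseteq> monoms r n" using gk unfolding monoms_deg_def by auto
        note lg = lm_prop[OF g(2) gk']
        define c where "c = Poly_Mapping.lookup g \<beta>"
        have c: "c \<noteq> 0" using lg g(3) unfolding c_def by (simp add: in_keys_iff)
        define h where "h = g - Poly_Mapping.single \<beta> c"
        have hk: "\<gamma> \<in> monoms_deg r n e \<and> ord \<gamma> \<beta>" if \<gamma>: "\<gamma> \<in> Poly_Mapping.keys h" for \<gamma>
        proof -
          have "\<gamma> \<noteq> \<beta>" using \<gamma> unfolding h_def c_def by (auto simp: in_keys_iff lookup_minus)
          moreover have "\<gamma> \<in> Poly_Mapping.keys g" using \<gamma> \<open>\<gamma> \<noteq> \<beta>\<close> unfolding h_def
            by (auto simp: in_keys_iff lookup_minus lookup_single)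
          ultimately show ?thesis using lg g(3) gk by auto
        qed
        have gf: "g * f \<in> ?SR"
        proof -
          have "g * f \<in> V.span (Gs r n fs' d)"
            by (rule span_mult_poly[OF ok' gG okf e_def d])
          then show ?thesis using old_sub by blast
        qed
        have hf: "h * f \<in> ?SR"
        proof -
          have "h * f = (\<Sum>\<gamma>\<in>Poly_Mapping.keys h. Poly_Mapping.single \<gamma> (Poly_Mapping.lookup h \<gamma>)) * f"
            by (subst poly_expand[of h]) simp
          also have "\<dots> = (\<Sum>\<gamma>\<in>Poly_Mapping.keys h. Poly_Mapping.single 0 (Poly_Mapping.lookup h \<gamma>) * (Poly_Mapping.single \<gamma> 1 * f))"
            unfolding sum_distrib_right
            by (rule sum.cong[OF refl], subst single_eq_smul) (simp add: mult.assoc)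
          also have "\<dots> \<in> ?SR"
          proof (rule V.span_sum)
            fix \<gamma> assume \<gamma>: "\<gamma> \<in> Poly_Mapping.keys h"
            have "\<gamma> \<in> monoms_deg r n e" "ord \<gamma> \<beta>" using hk[OF \<gamma>] by auto
            moreover have "\<gamma> \<in> monoms r n" "\<beta> \<in> monoms r n" using \<open>\<gamma> \<in> monoms_deg r n e\<close> b
              unfolding monoms_deg_def by auto
            ultimately have "Poly_Mapping.single \<gamma> 1 * f \<in> ?SR" using 1 by blast
            then show "Poly_Mapping.single 0 (Poly_Mapping.lookup h \<gamma>) * (Poly_Mapping.single \<gamma> 1 * f) \<in> ?SR"
              by (rule V.span_scale)
          qed
          finally show ?thesis .
        qed
        have "g * f - h * f = Poly_Mapping.single \<beta> c * f"
          unfolding h_def by (simp add: algebra_simps)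
        also have "\<dots> = Poly_Mapping.single 0 c * (Poly_Mapping.single \<beta> 1 * f)"
          by (subst single_eq_smul) (simp add: mult.assoc)
        finally have eq: "Poly_Mapping.single 0 (inverse c) * (g * f - h * f) = Poly_Mapping.single \<beta> 1 * f"
          using c by (simp add: mult.assoc[symmetric] mult_single)
        have "Poly_Mapping.single 0 (inverse c) * (g * f - h * f) \<in> ?SR"
          using gf hf by (intro V.span_scale V.span_diff)
        then show ?thesis by (simp only: eq)
      qed
    qed
  qed
  have sub1: "set rows \<subseteq> V.span (Gs r n (f # fs') d)"
  proof
    fix x assume x: "x \<in> set rows"
    show "x \<in> V.span (Gs r n (f # fs') d)"
    proof (cases "x \<in> set (M3H_rev r n ord fs' d)")
      case True
      then have ne: "fs' \<noteq> []" by (cases fs') auto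
      have "x \<in> V.span (Gs r n fs' d)" using True IHd[OF ne] V.span_superset by blast
      then show ?thesis using V.span_mono[of "Gs r n fs' d" "Gs r n (f # fs') d"] Gs_cons by blast
    next
      case False
      then obtain \<beta> where "\<beta> \<in> monoms_deg r n e" "x = Poly_Mapping.single \<beta> 1 * f"
        using x rows dl by auto
      then have "x \<in> Gs r n (f # fs') d" unfolding Gs_cons e_def by blast
      then show ?thesis by (rule V.span_base)
    qed
  qed
  have sub2: "Gs r n (f # fs') d \<subseteq> ?SR"
  proof
    fix x assume "x \<in> Gs r n (f # fs') d"
    then consider (a) \<beta> where "\<beta> \<in> monoms_deg r n e" "x = Poly_Mapping.single \<beta> 1 * f"
      | (b) "x \<in> Gs r n fs' d" unfolding Gs_cons e_def by blast
    then show "x \<in> ?SR"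
    proof cases
      case a then show ?thesis using top by blast
    next
      case b then show ?thesis using old_sub V.span_superset by blast
    qed
  qed
  show ?case
    unfolding rows_def[symmetric] V.span_eq using sub1 sub2 by blast
qed

end

theorem mainTheorem16:
  fixes r :: nat and n :: "nat \<Rightarrow> nat" and ord :: "mon \<Rightarrow> mon \<Rightarrow> bool"
    and fs :: "'k::field_char_0 mpoly list" and d :: "int list"
  assumes "monomial_order r n ord"
    and "fs \<noteq> []"
    and "\<forall>f\<in>set fs. f \<in> polys r n \<and> f \<noteq> 0 \<and> multihomogeneous r n f"
    and "length d = r"
  shows "lin_span (set (M3H r n ord fs d)) = ideal_deg r n fs d"
proof -
  interpret mo r n ord by (rule mo.intro) (rule assms(1))
  have ok: "okfs r n fs" using assms(3) unfolding okfs_def by blast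
  have okr: "okfs r n (rev fs)" using assms(3) unfolding okfs_def by simp
  have "lin_span (set (M3H r n ord fs d)) = V.span (set (M3H_rev r n ord (rev fs) d))"
    unfolding M3H_def lin_span_eq ..
  also have "\<dots> = V.span (Gs r n (rev fs) d)"
    using main_rev[OF okr _ assms(4)] assms(2) by simp
  also have "\<dots> = V.span (Gs r n fs d)"
    by (rule arg_cong[where f = V.span], rule Gs_rev)
  also have "\<dots> = ideal_deg r n fs d"
    using ideal_deg_eq_span[OF ok assms(4)] by simp
  finally show ?thesis .
qed

end
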